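(* Let $c\in[\frac12,1)$ and let $d,\delta$ be positive integers with $d\ge\delta+3$. Let $G$ be a connected paw-friendly graph with maximum degree $\delta$ and $w:V(G)\to[0,1]$ a weight function with $w(V(G))=1$, and assume $G$ has no $d$-bounded $(w,c)$-balanced separator. Fix a bijection $\mathcal{O}:V(G)\to\{1,\dots,|V(G)|\}$, let $X$ be the set of minimal elements of $\le_A$, and let $\beta$ be the star-free bag of $G$. Then: (i) $\beta=X$ and $G[\beta]$ is bipartite; (ii) if $(X_1,X_2)$ is a bipartition of $G[\beta]$, then for $i=1,2$ the set $\mathcal{S}_i=\{S_x: x\in X_i\}$ is loosely laminar.
   Context: For $X\subseteq V(G)$, $w(X)=\sum_{x\in X}w(x)$; $N[v]$ is the closed neighborhood; $N^d[v]$ the set of vertices at distance at most $d$ from $v$. $X$ is $d$-bounded if $X\subseteq N^d[v]$ for some $v$; $X$ is a $(w,c)$-balanced separator if every component $D$ of $G\setminus X$ has $w(D)\le c$. A paw is the graph with vertices $v_1,\dots,v_4$ and edges $v_1v_2,v_2v_3,v_3v_4,v_2v_4$. For a graph $H$, $x\in V(H)$ breaks $Y\subseteq V(H)\setminus\{x\}$ (in $H$) if for every connected component $D$ of $H\setminus N_H[x]$, $Y\not\subseteq N_H[D]$ ($N_H[D]$ being $D$ plus its neighbors). $G$ is paw-friendly if $G$ is perfect and for every induced subgraph $H$ and every induced paw in $H$ with vertex set $\{c,a,b_1,b_2\}$ and edges $\{ab_1,ab_2,b_1b_2,ac\}$, either $a$ breaks $\{c,b_1,b_2\}$, or $b_1$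 breaks $\{c,b_2\}$, or $b_2$ breaks $\{c,b_1\}$ in $H$. For $v\in V(G)$, the canonical star separation $S_v=(A_v,C_v,B_v)$: $B_v$ is the largest-weight connected component of $G\setminus N[v]$ (unique under these assumptions), $C_v$ consists of $v$ and every neighbor of $v$ with a neighbor in $B_v$, $A_v=V(G)\setminus(B_v\cup C_v)$. $u,v$ are star twins if $B_u=B_v$, $C_u\setminus\{u\}=C_v\setminus\{v\}$, $A_u\setminus\{v\}=A_v\setminus\{u\}$. $x\le_A y$ iff $x=y$, or $x,y$ are star twins and $\mathcal{O}(x)<\mathcal{O}(y)$, or $x,y$ are not star twins and $y\in A_x$ (a partial order). The star-free bag is $\beta=\bigcap_{x\in X}(B_x\cup C_x)$. Separations $S,S'$ (triples $(A,C,B)$) are loosely non-crossing if $A(S)\cap C(S')=\emptyset=A(S')\cap C(S)$; a set of separations is loosely laminar if every two are loosely non-crossing. *)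

theory Defs
  imports Complex_Main
begin

definition graph :: "'a set \<Rightarrow> ('a \<Rightarrow> 'a \<Rightarrow> bool) \<Rightarrow> bool" where
  "graph V E \<longleftrightarrow> finite V \<and> (\<forall>x y. E x y \<longrightarrow> x \<in> V \<and> y \<in> V)
     \<and> (\<forall>x y. E x y \<longrightarrow> E y x) \<and> (\<forall>x. \<not> E x x)"

definition restr :: "('a \<Rightarrow> 'a \<Rightarrow> bool) \<Rightarrow> 'a set \<Rightarrow> 'a \<Rightarrow> 'a \<Rightarrow> bool" where
  "restr E S x y \<longleftrightarrow> x \<in> S \<and> y \<in> S \<and> E x y"

definition comps :: "('a \<Rightarrow> 'a \<Rightarrow> bool) \<Rightarrow> 'a set \<Rightarrow> 'a set set" where
  "comps E S = {{y \<in> S. (restr E S)\<^sup>*\<^sup>* x y} | x. x \<in> S}"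

definition connected_graph :: "'a set \<Rightarrow> ('a \<Rightarrow> 'a \<Rightarrow> bool) \<Rightarrow> bool" where
  "connected_graph V E \<longleftrightarrow> V \<noteq> {} \<and> (\<forall>x\<in>V. \<forall>y\<in>V. (restr E V)\<^sup>*\<^sup>* x y)"

definition nbr :: "'a set \<Rightarrow> ('a \<Rightarrow> 'a \<Rightarrow> bool) \<Rightarrow> 'a \<Rightarrow> 'a set" where
  "nbr U E v = {u \<in> U. E v u}"

definition cnbr :: "'a set \<Rightarrow> ('a \<Rightarrow> 'a \<Rightarrow> bool) \<Rightarrow> 'a \<Rightarrow> 'a set" where
  "cnbr U E v = insert v (nbr U E v)"

definition cnbr_set :: "'a set \<Rightarrow> ('a \<Rightarrow> 'a \<Rightarrow> bool) \<Rightarrow> 'a set \<Rightarrow> 'a set" where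
  "cnbr_set U E D = D \<union> {u \<in> U. \<exists>x\<in>D. E u x}"

definition max_degree :: "'a set \<Rightarrow> ('a \<Rightarrow> 'a \<Rightarrow> bool) \<Rightarrow> nat" where
  "max_degree V E = Max ((\<lambda>v. card (nbr V E v)) ` V)"

definition ball :: "'a set \<Rightarrow> ('a \<Rightarrow> 'a \<Rightarrow> bool) \<Rightarrow> nat \<Rightarrow> 'a \<Rightarrow> 'a set" where
  "ball V E d v = {u \<in> V. \<exists>k\<le>d. (restr E V ^^ k) v u}"

definition d_bounded :: "'a set \<Rightarrow> ('a \<Rightarrow> 'a \<Rightarrow> bool) \<Rightarrow> nat \<Rightarrow> 'a set \<Rightarrow> bool" where
  "d_bounded V E d X \<longleftrightarrow> (\<exists>v\<in>V. X \<subseteq> ball V E d v)"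

definition balanced_sep :: "'a set \<Rightarrow> ('a \<Rightarrow> 'a \<Rightarrow> bool) \<Rightarrow> ('a \<Rightarrow> real) \<Rightarrow> real \<Rightarrow> 'a set \<Rightarrow> bool" where
  "balanced_sep V E w c X \<longleftrightarrow> X \<subseteq> V \<and> (\<forall>D\<in>comps E (V - X). sum w D \<le> c)"

definition clique_number :: "('a \<Rightarrow> 'a \<Rightarrow> bool) \<Rightarrow> 'a set \<Rightarrow> nat" where
  "clique_number E U = Max {card K | K. K \<subseteq> U \<and> (\<forall>x\<in>K. \<forall>y\<in>K. x \<noteq> y \<longrightarrow> E x y)}"

definition chromatic_number :: "('a \<Rightarrow> 'a \<Rightarrow> bool) \<Rightarrow> 'a set \<Rightarrow> nat" where
  "chromatic_number E U = (LEAST k. \<exists>f :: 'a \<Rightarrow> nat. (\<forall>u\<in>U. f u < k)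
      \<and> (\<forall>u\<in>U. \<forall>v\<in>U. E u v \<longrightarrow> f u \<noteq> f v))"

definition perfect :: "'a set \<Rightarrow> ('a \<Rightarrow> 'a \<Rightarrow> bool) \<Rightarrow> bool" where
  "perfect V E \<longleftrightarrow> (\<forall>U\<subseteq>V. chromatic_number E U = clique_number E U)"

definition breaks :: "'a set \<Rightarrow> ('a \<Rightarrow> 'a \<Rightarrow> bool) \<Rightarrow> 'a \<Rightarrow> 'a set \<Rightarrow> bool" where
  "breaks U E x Y \<longleftrightarrow> (\<forall>D\<in>comps E (U - cnbr U E x). \<not> Y \<subseteq> cnbr_set U E D)"

definition induced_paw :: "'a set \<Rightarrow> ('a \<Rightarrow> 'a \<Rightarrow> bool) \<Rightarrow> 'a \<Rightarrow> 'a \<Rightarrow> 'a \<Rightarrow> 'a \<Rightarrow> bool" where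
  "induced_paw U E c a b1 b2 \<longleftrightarrow> c \<in> U \<and> a \<in> U \<and> b1 \<in> U \<and> b2 \<in> U
     \<and> distinct [c, a, b1, b2]
     \<and> E a b1 \<and> E a b2 \<and> E b1 b2 \<and> E a c \<and> \<not> E c b1 \<and> \<not> E c b2"

definition paw_friendly :: "'a set \<Rightarrow> ('a \<Rightarrow> 'a \<Rightarrow> bool) \<Rightarrow> bool" where
  "paw_friendly V E \<longleftrightarrow> perfect V E \<and>
     (\<forall>U\<subseteq>V. \<forall>c a b1 b2. induced_paw U E c a b1 b2 \<longrightarrow>
        breaks U E a {c, b1, b2} \<or> breaks U E b1 {c, b2} \<or> breaks U E b2 {c, b1})"

definition Bv :: "'a set \<Rightarrow> ('a \<Rightarrow> 'a \<Rightarrow> bool) \<Rightarrow> ('a \<Rightarrow> real) \<Rightarrow> 'a \<Rightarrow> 'a set" where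
  "Bv V E w v = (SOME D. D \<in> comps E (V - cnbr V E v)
       \<and> (\<forall>D'\<in>comps E (V - cnbr V E v). sum w D' \<le> sum w D))"

definition Cv :: "'a set \<Rightarrow> ('a \<Rightarrow> 'a \<Rightarrow> bool) \<Rightarrow> ('a \<Rightarrow> real) \<Rightarrow> 'a \<Rightarrow> 'a set" where
  "Cv V E w v = insert v {u \<in> nbr V E v. \<exists>b\<in>Bv V E w v. E u b}"

definition Av :: "'a set \<Rightarrow> ('a \<Rightarrow> 'a \<Rightarrow> bool) \<Rightarrow> ('a \<Rightarrow> real) \<Rightarrow> 'a \<Rightarrow> 'a set" where
  "Av V E w v = V - (Bv V E w v \<union> Cv V E w v)"

definition star_sep :: "'a set \<Rightarrow> ('a \<Rightarrow> 'a \<Rightarrow> bool) \<Rightarrow> ('a \<Rightarrow> real) \<Rightarrow> 'a \<Rightarrow> 'a set \<times> 'a set \<times> 'a set" where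
  "star_sep V E w v = (Av V E w v, Cv V E w v, Bv V E w v)"

definition star_twins :: "'a set \<Rightarrow> ('a \<Rightarrow> 'a \<Rightarrow> bool) \<Rightarrow> ('a \<Rightarrow> real) \<Rightarrow> 'a \<Rightarrow> 'a \<Rightarrow> bool" where
  "star_twins V E w u v \<longleftrightarrow> Bv V E w u = Bv V E w v
     \<and> Cv V E w u - {u} = Cv V E w v - {v}
     \<and> Av V E w u - {v} = Av V E w v - {u}"

definition le_A :: "'a set \<Rightarrow> ('a \<Rightarrow> 'a \<Rightarrow> bool) \<Rightarrow> ('a \<Rightarrow> real) \<Rightarrow> ('a \<Rightarrow> nat) \<Rightarrow> 'a \<Rightarrow> 'a \<Rightarrow> bool" where
  "le_A V E w Ord x y \<longleftrightarrow> x = y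
     \<or> (star_twins V E w x y \<and> Ord x < Ord y)
     \<or> (\<not> star_twins V E w x y \<and> y \<in> Av V E w x)"

definition minimal_A :: "'a set \<Rightarrow> ('a \<Rightarrow> 'a \<Rightarrow> bool) \<Rightarrow> ('a \<Rightarrow> real) \<Rightarrow> ('a \<Rightarrow> nat) \<Rightarrow> 'a set" where
  "minimal_A V E w Ord = {x \<in> V. \<forall>y\<in>V. le_A V E w Ord y x \<longrightarrow> y = x}"

definition star_free_bag :: "'a set \<Rightarrow> ('a \<Rightarrow> 'a \<Rightarrow> bool) \<Rightarrow> ('a \<Rightarrow> real) \<Rightarrow> 'a set \<Rightarrow> 'a set" where
  "star_free_bag V E w X = V \<inter> (\<Inter>x\<in>X. Bv V E w x \<union> Cv V E w x)"

definition bipartition :: "('a \<Rightarrow> 'a \<Rightarrow> bool) \<Rightarrow> 'a set \<Rightarrow> 'a set \<Rightarrow> 'a set \<Rightarrow> bool" where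
  "bipartition E U X1 X2 \<longleftrightarrow> X1 \<union> X2 = U \<and> X1 \<inter> X2 = {}
     \<and> (\<forall>x\<in>X1. \<forall>y\<in>X1. \<not> E x y) \<and> (\<forall>x\<in>X2. \<forall>y\<in>X2. \<not> E x y)"

definition bipartite :: "('a \<Rightarrow> 'a \<Rightarrow> bool) \<Rightarrow> 'a set \<Rightarrow> bool" where
  "bipartite E U \<longleftrightarrow> (\<exists>X1 X2. bipartition E U X1 X2)"

definition loosely_non_crossing :: "'a set \<times> 'a set \<times> 'a set \<Rightarrow> 'a set \<times> 'a set \<times> 'a set \<Rightarrow> bool" where
  "loosely_non_crossing S S' \<longleftrightarrow>
     fst S \<inter> fst (snd S') = {} \<and> fst S' \<inter> fst (snd S) = {}"

definition loosely_laminar :: "('a set \<times> 'a set \<times> 'a set) set \<Rightarrow> bool" where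
  "loosely_laminar \<S> \<longleftrightarrow> (\<forall>S\<in>\<S>. \<forall>S'\<in>\<S>. loosely_non_crossing S S')"

end

theory Submission
  imports Defs
begin

lemma restr_sym: "(\<forall>x y. E x y \<longrightarrow> E y x) \<Longrightarrow> restr E S x y \<Longrightarrow> restr E S y x"
  by (auto simp: restr_def)

lemma rtranclp_restr_sym:
  assumes "\<forall>x y. E x y \<longrightarrow> E y x" "(restr E S)\<^sup>*\<^sup>* x y"
  shows "(restr E S)\<^sup>*\<^sup>* y x"
  using assms(2)
proof (induction rule: rtranclp_induct)
  case base then show ?case by simp
next
  case (step y z)
  then have "restr E S z y" using restr_sym[OF assms(1)] by blast
  then show ?case using step(3) by (meson converse_rtranclp_into_rtranclp)
qed

lemma rtranclp_restr_in:
  assumes "(restr E S)\<^sup>*\<^sup>* u v" "u \<in> S" shows "v \<in> S"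
  using assms by (induction rule: rtranclp_induct) (auto simp: restr_def)

lemma comp_eq:
  assumes sym: "\<forall>x y. E x y \<longrightarrow> E y x" and D: "D \<in> comps E S" and u: "u \<in> D"
  shows "D = {y \<in> S. (restr E S)\<^sup>*\<^sup>* u y}"
proof -
  obtain x where x: "x \<in> S" "D = {y \<in> S. (restr E S)\<^sup>*\<^sup>* x y}" using D by (auto simp: comps_def)
  have xu: "(restr E S)\<^sup>*\<^sup>* x u" using u x by auto
  have ux: "(restr E S)\<^sup>*\<^sup>* u x" using rtranclp_restr_sym[OF sym xu] .
  show ?thesis using x xu ux by (auto intro: rtranclp_trans)
qed

lemma comp_sub: "D \<in> comps E S \<Longrightarrow> D \<subseteq> S"
  by (auto simp: comps_def)

lemma comp_ne: "D \<in> comps E S \<Longrightarrow> \<exists>x. x \<in> D"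
  by (auto simp: comps_def)

lemma comp_closed:
  assumes sym: "\<forall>x y. E x y \<longrightarrow> E y x" and D: "D \<in> comps E S" and b: "b \<in> D"
    and u: "u \<in> S" and e: "E b u"
  shows "u \<in> D"
proof -
  have "b \<in> S" using comp_sub[OF D] b by auto
  then have "restr E S b u" using u e by (auto simp: restr_def)
  then show ?thesis using comp_eq[OF sym D b] u by auto
qed

lemma comp_path:
  assumes sym: "\<forall>x y. E x y \<longrightarrow> E y x" and D: "D \<in> comps E S" and "u \<in> D" "v \<in> D"
  shows "(restr E S)\<^sup>*\<^sup>* u v"
  using comp_eq[OF sym D assms(3)] assms(4) by auto

lemma comp_reach:
  assumes sym: "\<forall>x y. E x y \<longrightarrow> E y x" and D: "D \<in> comps E S" and u: "u \<in> D"
    and r: "(restr E S)\<^sup>*\<^sup>* u v"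
  shows "v \<in> D"
proof -
  have "u \<in> S" using comp_sub[OF D] u by auto
  then have "v \<in> S" using rtranclp_restr_in[OF r] by auto
  then show ?thesis using comp_eq[OF sym D u] r by auto
qed

lemma comps_disj:
  assumes sym: "\<forall>x y. E x y \<longrightarrow> E y x" and "D1 \<in> comps E S" "D2 \<in> comps E S"
    "z \<in> D1" "z \<in> D2"
  shows "D1 = D2"
  using comp_eq[OF sym assms(2,4)] comp_eq[OF sym assms(3,5)] by simp

lemma comps_finite: "finite S \<Longrightarrow> finite (comps E S)"
  by (rule finite_subset[of _ "Pow S"]) (auto simp: comps_def)

lemma rtranclp_exit:
  assumes "r\<^sup>*\<^sup>* u v" "P u" "\<not> P v"
  shows "\<exists>s t. r\<^sup>*\<^sup>* u s \<and> r s t \<and> P s \<and> \<not> P t"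
  using assms
proof (induction rule: rtranclp_induct)
  case base then show ?case by simp
next
  case (step y z)
  show ?case
  proof (cases "P y")
    case True then show ?thesis using step by blast
  next
    case False then show ?thesis using step by blast
  qed
qed

lemma comp_sub_comp:
  assumes sym: "\<forall>x y. E x y \<longrightarrow> E y x" and L: "L \<in> comps E S1" and sub: "L \<subseteq> S2"
  shows "\<exists>D\<in>comps E S2. L \<subseteq> D"
proof -
  obtain x where x: "x \<in> S1" "L = {y \<in> S1. (restr E S1)\<^sup>*\<^sup>* x y}" using L by (auto simp: comps_def)
  have xL: "x \<in> L" using x by auto
  have reach: "(restr E S2)\<^sup>*\<^sup>* x y" if "y \<in> L" for y
  proof -
    have "(restr E S1)\<^sup>*\<^sup>* x y" using that x by auto
    then show ?thesis
    proof (induction rule: rtranclp_induct)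
      case base then show ?case by simp
    next
      case (step y' z)
      have "y' \<in> S1" "z \<in> S1" "E y' z" using step(2) by (auto simp: restr_def)
      moreover have "(restr E S1)\<^sup>*\<^sup>* x z" using step(1,2) by auto
      ultimately have "y' \<in> L" "z \<in> L" using step(1) x by auto
      then have "restr E S2 y' z" using sub \<open>E y' z\<close> by (auto simp: restr_def)
      then show ?case using step(3) by auto
    qed
  qed
  have "x \<in> S2" using xL sub by auto
  then have "{y \<in> S2. (restr E S2)\<^sup>*\<^sup>* x y} \<in> comps E S2" by (auto simp: comps_def)
  moreover have "L \<subseteq> {y \<in> S2. (restr E S2)\<^sup>*\<^sup>* x y}" using reach sub by auto
  ultimately show ?thesis by blast
qed


locale setting =
  fixes V :: "'a set" and E :: "'a \<Rightarrow> 'a \<Rightarrow> bool" and w :: "'a \<Rightarrow> real"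
    and c :: real and d :: nat and Ord :: "'a \<Rightarrow> nat"
  assumes graph: "graph V E" and conn: "connected_graph V E" and pawf: "paw_friendly V E"
    and wnn: "\<forall>v\<in>V. 0 \<le> w v" and wsum: "sum w V = 1" and chalf: "1/2 \<le> c" and d2: "2 \<le> d"
    and nosep: "\<not> (\<exists>X. d_bounded V E d X \<and> balanced_sep V E w c X)"
    and ordbij: "bij_betw Ord V {1..card V}"
begin

abbreviation "BB v \<equiv> Bv V E w v"
abbreviation "CC v \<equiv> Cv V E w v"
abbreviation "AA v \<equiv> Av V E w v"
abbreviation "XX \<equiv> minimal_A V E w Ord"

lemma sym: "\<forall>x y. E x y \<longrightarrow> E y x" using graph by (simp add: graph_def)
lemma fin: "finite V" using graph by (simp add: graph_def)
lemma inV: "E x y \<Longrightarrow> x \<in> V \<and> y \<in> V" using graph by (simp add: graph_def)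
lemma irr: "\<not> E x x" using graph by (simp add: graph_def)
lemma symE: "E x y \<Longrightarrow> E y x" using sym by blast

lemma cnbr_sub: "v \<in> V \<Longrightarrow> cnbr V E v \<subseteq> V"
  by (auto simp: cnbr_def nbr_def)

lemma ball2:
  assumes "a \<in> V" "p \<in> V" "z \<in> V" "p = a \<or> E a p" "z = p \<or> E p z"
  shows "z \<in> ball V E d a"
proof -
  have r1: "(restr E V ^^ 1) x y" if "E x y" for x y
    using that inV by (auto simp: restr_def)
  have r2: "(restr E V ^^ 2) x y" if "E x u" "E u y" for x u y
  proof -
    have "(restr E V ^^ Suc 1) x y"
      using relpowp_Suc_I[OF r1[OF that(1)]] that(2) inV by (auto simp: restr_def)
    then show ?thesis by (simp add: numeral_2_eq_2)
  qed
  show ?thesis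
  proof (cases "z = a")
    case True then show ?thesis using assms(1) by (auto simp: ball_def intro: exI[of _ 0])
  next
    case False
    show ?thesis
    proof (cases "z = p")
      case True
      then have "E a z" using assms False by auto
      then show ?thesis using assms(3) d2 r1 by (auto simp: ball_def intro!: exI[of _ 1])
    next
      case False
      then have pz: "E p z" using assms by auto
      show ?thesis
      proof (cases "p = a")
        case True then show ?thesis using assms(3) pz d2 r1 by (auto simp: ball_def intro!: exI[of _ 1])
      next
        case False
        then have "E a p" using assms by auto
        then show ?thesis using assms(3) pz d2 r2 by (auto simp: ball_def intro!: exI[of _ 2])
      qed
    qed
  qed
qed

lemma cnbr_ball: "v \<in> V \<Longrightarrow> cnbr V E v \<subseteq> ball V E d v"
  using ball2[of v v] by (auto simp: cnbr_def nbr_def)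

lemma heavy_exists:
  assumes "Y \<subseteq> V" "v \<in> V" "Y \<subseteq> ball V E d v"
  shows "\<exists>D\<in>comps E (V - Y). c < sum w D"
proof -
  have "d_bounded V E d Y" using assms by (auto simp: d_bounded_def)
  then have "\<not> balanced_sep V E w c Y" using nosep by blast
  then show ?thesis using assms(1) by (auto simp: balanced_sep_def not_le)
qed

lemma sum_mono_sub: "A \<subseteq> B \<Longrightarrow> B \<subseteq> V \<Longrightarrow> sum w A \<le> sum w B"
  using sum_mono2[of B A w] fin finite_subset wnn by blast

lemma heavy_unique:
  assumes "S \<subseteq> V" "D1 \<in> comps E S" "D2 \<in> comps E S" "c < sum w D1" "c < sum w D2"
  shows "D1 = D2"
proof (rule ccontr)
  assume ne: "D1 \<noteq> D2"
  have disj: "D1 \<inter> D2 = {}" using comps_disj[OF sym assms(2,3)] ne by blast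
  have sub: "D1 \<union> D2 \<subseteq> V" using comp_sub assms by blast
  have fD: "finite D1" "finite D2" using finite_subset sub fin by auto
  have "sum w (D1 \<union> D2) = sum w D1 + sum w D2" using sum.union_disjoint[OF fD disj] .
  moreover have "sum w (D1 \<union> D2) \<le> sum w V" using sum_mono_sub sub by auto
  ultimately show False using wsum chalf assms(4,5) by linarith
qed

lemma heavy_in_gen:
  assumes "S2 \<subseteq> V" "L \<in> comps E S1" "L \<subseteq> S2" "c < sum w L" "D \<in> comps E S2" "c < sum w D"
  shows "L \<subseteq> D"
proof -
  obtain D' where D': "D' \<in> comps E S2" "L \<subseteq> D'" using comp_sub_comp[OF sym assms(2,3)] by blast
  have "D' \<subseteq> V" using comp_sub[OF D'(1)] assms(1) by auto
  then have "sum w L \<le> sum w D'" using sum_mono_sub D'(2) by auto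
  then have "D' = D" using heavy_unique[OF assms(1) D'(1) assms(5)] assms(4,6) by linarith
  then show ?thesis using D' by simp
qed

lemma Bv_spec:
  assumes v: "v \<in> V"
  shows "BB v \<in> comps E (V - cnbr V E v) \<and> c < sum w (BB v)"
proof -
  let ?C = "comps E (V - cnbr V E v)"
  obtain D0 where D0: "D0 \<in> ?C" "c < sum w D0"
    using heavy_exists[OF cnbr_sub[OF v] v cnbr_ball[OF v]] by blast
  have finC: "finite ?C" using comps_finite fin by auto
  have neC: "?C \<noteq> {}" using D0 by auto
  have "Max (sum w ` ?C) \<in> sum w ` ?C" using Max_in[of "sum w ` ?C"] finC neC by auto
  then obtain Dm where Dm: "Dm \<in> ?C" "sum w Dm = Max (sum w ` ?C)" by auto
  have ex: "\<exists>D. D \<in> ?C \<and> (\<forall>D'\<in>?C. sum w D' \<le> sum w D)"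
    using Dm finC by (intro exI[of _ Dm]) auto
  have B: "BB v \<in> ?C \<and> (\<forall>D'\<in>?C. sum w D' \<le> sum w (BB v))"
    unfolding Bv_def by (rule someI_ex[OF ex])
  then show ?thesis using D0 by force
qed

lemma Bv_unique:
  "v \<in> V \<Longrightarrow> D \<in> comps E (V - cnbr V E v) \<Longrightarrow> c < sum w D \<Longrightarrow> D = BB v"
  using heavy_unique[of "V - cnbr V E v" D "BB v"] Bv_spec by auto

lemma Bv_sub: "v \<in> V \<Longrightarrow> b \<in> BB v \<Longrightarrow> b \<in> V \<and> b \<noteq> v \<and> \<not> E v b"
  using comp_sub[of "BB v" E "V - cnbr V E v"] Bv_spec[of v]
  by (auto simp: cnbr_def nbr_def)

lemma Bv_closed:
  "v \<in> V \<Longrightarrow> b \<in> BB v \<Longrightarrow> u \<in> V \<Longrightarrow> E b u \<Longrightarrow> u \<noteq> v \<Longrightarrow> \<not> E v u \<Longrightarrow> u \<in> BB v"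
  using comp_closed[OF sym, of "BB v" "V - cnbr V E v" b u] Bv_spec[of v]
  by (auto simp: cnbr_def nbr_def)

lemma heavy_in:
  assumes "y \<in> V" "L \<in> comps E S1" "L \<subseteq> V - cnbr V E y" "c < sum w L"
  shows "L \<subseteq> BB y"
  using heavy_in_gen[OF _ assms(2,3,4)] Bv_spec[OF assms(1)] by auto

lemma A_props:
  assumes v: "v \<in> V" and y: "y \<in> AA v"
  shows "y \<in> V \<and> y \<notin> BB v \<and> y \<noteq> v \<and> (\<forall>b\<in>BB v. \<not> E y b)"
proof -
  have y1: "y \<in> V" "y \<notin> BB v" "y \<notin> CC v" using y by (auto simp: Av_def)
  have yv: "y \<noteq> v" using y1(3) by (auto simp: Cv_def)
  have "\<not> E y b" if b: "b \<in> BB v" for b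
  proof
    assume e: "E y b"
    show False
    proof (cases "E v y")
      case True
      then have "y \<in> CC v" using y1(1) e b by (auto simp: Cv_def nbr_def)
      then show False using y1 by simp
    next
      case False
      then have "y \<in> BB v" using Bv_closed[OF v b y1(1) symE[OF e] yv] by simp
      then show False using y1 by simp
    qed
  qed
  then show ?thesis using y1 yv by auto
qed

lemma A_mono:
  assumes x: "x \<in> V" and y: "y \<in> AA x"
  shows "BB x \<subseteq> BB y"
proof -
  have yp: "y \<in> V" "y \<notin> BB x" "\<forall>b\<in>BB x. \<not> E y b" using A_props[OF x y] by auto
  have "BB x \<subseteq> V - cnbr V E y"
    using Bv_sub[OF x] yp by (auto simp: cnbr_def nbr_def)
  then show ?thesis using heavy_in[OF yp(1)] Bv_spec[OF x] by blast
qed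

lemma A_trans:
  assumes x: "x \<in> V" and y: "y \<in> AA x" and v: "v \<in> AA y" and vx: "v \<noteq> x"
  shows "v \<in> AA x"
proof -
  have yV: "y \<in> V" using A_props[OF x y] by simp
  have vp: "v \<in> V" "v \<notin> BB y" "\<forall>b\<in>BB y. \<not> E v b" using A_props[OF yV v] by auto
  have sub: "BB x \<subseteq> BB y" using A_mono[OF x y] .
  show ?thesis using vp sub vx by (auto simp: Av_def Cv_def)
qed

lemma twins_sym: "star_twins V E w x y \<Longrightarrow> star_twins V E w y x"
  by (auto simp: star_twins_def)

lemma twin_A:
  assumes "x \<in> V" "y \<in> V" "star_twins V E w x y" "x \<noteq> y"
  shows "y \<in> AA x"
proof -
  have t: "BB x = BB y" "CC x - {x} = CC y - {y}" using assms(3) by (auto simp: star_twins_def)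
  have "y \<notin> BB x" using Bv_sub[OF assms(2)] t(1) by auto
  moreover have "y \<notin> CC x"
  proof
    assume "y \<in> CC x"
    then have "y \<in> CC y - {y}" using t(2) assms(4) by blast
    then show False by simp
  qed
  ultimately show ?thesis using assms(2) by (auto simp: Av_def)
qed

lemma CC_minus:
  assumes v: "v \<in> V"
  shows "CC v - {v} = {u \<in> V. u \<notin> BB v \<and> (\<exists>b\<in>BB v. E u b)}"
proof
  show "CC v - {v} \<subseteq> {u \<in> V. u \<notin> BB v \<and> (\<exists>b\<in>BB v. E u b)}"
    using Bv_sub[OF v] by (auto simp: Cv_def nbr_def)
next
  show "{u \<in> V. u \<notin> BB v \<and> (\<exists>b\<in>BB v. E u b)} \<subseteq> CC v - {v}"
  proof
    fix u assume u: "u \<in> {u \<in> V. u \<notin> BB v \<and> (\<exists>b\<in>BB v. E u b)}"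
    then obtain b where b: "b \<in> BB v" "E u b" "u \<in> V" "u \<notin> BB v" by auto
    have uv: "u \<noteq> v" using b Bv_sub[OF v b(1)] by auto
    have "E v u"
    proof (rule ccontr)
      assume "\<not> E v u"
      then have "u \<in> BB v" using Bv_closed[OF v b(1) b(3) symE[OF b(2)] uv] by simp
      then show False using b by simp
    qed
    then show "u \<in> CC v - {v}" using b uv by (auto simp: Cv_def nbr_def)
  qed
qed

lemma sameB_twins:
  assumes "x \<in> V" "y \<in> V" "BB x = BB y"
  shows "star_twins V E w x y"
proof -
  let ?N = "{u \<in> V. u \<notin> BB x \<and> (\<exists>b\<in>BB x. E u b)}"
  have cx: "CC x - {x} = ?N" using CC_minus[OF assms(1)] .
  have cy: "CC y - {y} = ?N" using CC_minus[OF assms(2)] assms(3) by simp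
  have ix: "x \<in> CC x" "y \<in> CC y" by (auto simp: Cv_def)
  have CX: "CC x = insert x ?N" using cx ix by blast
  have CY: "CC y = insert y ?N" using cy ix by blast
  have "AA x - {y} = AA y - {x}" unfolding Av_def using CX CY assms(3) by auto
  then show ?thesis using cx cy assms(3) by (simp add: star_twins_def)
qed

lemma le_A_props:
  assumes "x \<in> V" "y \<in> V" "le_A V E w Ord x y" "x \<noteq> y"
  shows "y \<in> AA x \<and> BB x \<subseteq> BB y \<and> (BB x = BB y \<longrightarrow> Ord x < Ord y)"
proof -
  have "(star_twins V E w x y \<and> Ord x < Ord y) \<or> (\<not> star_twins V E w x y \<and> y \<in> AA x)"
    using assms(3,4) unfolding le_A_def by blast
  then have yA: "y \<in> AA x" using twin_A[OF assms(1,2) _ assms(4)] by blast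
  moreover have "BB x \<subseteq> BB y" using A_mono[OF assms(1) yA] .
  moreover have "BB x = BB y \<longrightarrow> Ord x < Ord y"
    using sameB_twins[OF assms(1,2)] assms(3,4) by (auto simp: le_A_def)
  ultimately show ?thesis by blast
qed

lemma XX_sub: "XX \<subseteq> V" by (auto simp: minimal_A_def)

lemma Ord_le: "v \<in> V \<Longrightarrow> Ord v \<le> card V"
  using ordbij by (auto simp: bij_betw_def)

lemma Ord_inj: "inj_on Ord V"
  using ordbij by (auto simp: bij_betw_def)

lemma cover: "v \<in> V \<Longrightarrow> v \<in> XX \<or> (\<exists>x\<in>XX. v \<in> AA x)"
proof (induction "card (BB v) * (card V + 1) + Ord v" arbitrary: v rule: less_induct)
  case (less v)
  show ?case
  proof (cases "v \<in> XX")
    case True thus ?thesis by simp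
  next
    case False
    have "\<not> (\<forall>y\<in>V. le_A V E w Ord y v \<longrightarrow> y = v)"
      using False less.prems unfolding minimal_A_def by blast
    then obtain y where y: "y \<in> V" "le_A V E w Ord y v" "y \<noteq> v" by blast
    have m: "v \<in> AA y" "BB y \<subseteq> BB v" "BB y = BB v \<longrightarrow> Ord y < Ord v"
      using le_A_props[OF y(1) less.prems y(2,3)] by auto
    have "card (BB y) * (card V + 1) + Ord y < card (BB v) * (card V + 1) + Ord v"
    proof (cases "BB y = BB v")
      case True then have "Ord y < Ord v" using m(3) by blast
      then show ?thesis using True by simp
    next
      case False
      have "BB v \<subseteq> V" using Bv_sub[OF less.prems] by auto
      then have "finite (BB v)" using fin by (rule finite_subset)
      moreover have "BB y \<subset> BB v" using m(2) False by blast
      ultimately have "card (BB y) < card (BB v)" by (simp add: psubset_card_mono)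
      then have "card (BB y) + 1 \<le> card (BB v)" by simp
      then have h1: "(card (BB y) + 1) * (card V + 1) \<le> card (BB v) * (card V + 1)" by (rule mult_le_mono1)
      have h2: "Ord y \<le> card V" using Ord_le y(1) by simp
      have h3: "(card (BB y) + 1) * (card V + 1) = card (BB y) * (card V + 1) + (card V + 1)"
        by (simp add: algebra_simps)
      show ?thesis using h1 h2 h3 by linarith
    qed
    then have IH: "y \<in> XX \<or> (\<exists>x\<in>XX. y \<in> AA x)" by (rule less.hyps[OF _ y(1)])
    then show ?thesis
    proof
      assume "y \<in> XX" then show ?thesis using m(1) by blast
    next
      assume "\<exists>x\<in>XX. y \<in> AA x"
      then obtain x where x: "x \<in> XX" "y \<in> AA x" by blast
      have "v \<noteq> x" using x(1) False by blast
      then have "v \<in> AA x" using A_trans[OF _ x(2) m(1)] x(1) XX_sub by blast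
      then show ?thesis using x by blast
    qed
  qed
qed

lemma XX_in_BC:
  assumes x: "x \<in> XX" and y: "y \<in> XX"
  shows "x \<in> BB y \<union> CC y"
proof (rule ccontr)
  assume nx: "x \<notin> BB y \<union> CC y"
  have xV: "x \<in> V" "y \<in> V" using x y XX_sub by auto
  have xA: "x \<in> AA y" using nx xV by (auto simp: Av_def)
  have xy: "x \<noteq> y" using nx by (auto simp: Cv_def)
  have mx: "\<forall>z\<in>V. le_A V E w Ord z x \<longrightarrow> z = x" using x by (auto simp: minimal_A_def)
  have my: "\<forall>z\<in>V. le_A V E w Ord z y \<longrightarrow> z = y" using y by (auto simp: minimal_A_def)
  show False
  proof (cases "star_twins V E w y x")
    case True
    have "Ord x \<noteq> Ord y" using Ord_inj xV xy by (auto simp: inj_on_def)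
    then have "Ord y < Ord x \<or> Ord x < Ord y" by arith
    then show False
    proof
      assume "Ord y < Ord x"
      then have "le_A V E w Ord y x" using True by (simp add: le_A_def)
      then show False using mx xV xy by auto
    next
      assume "Ord x < Ord y"
      then have "le_A V E w Ord x y" using twins_sym[OF True] by (simp add: le_A_def)
      then show False using my xV xy by auto
    qed
  next
    case False
    then have "le_A V E w Ord y x" using xA by (simp add: le_A_def)
    then show False using mx xV xy by auto
  qed
qed

lemma beta_eq: "star_free_bag V E w XX = XX"
proof
  show "star_free_bag V E w XX \<subseteq> XX"
  proof
    fix v assume v: "v \<in> star_free_bag V E w XX"
    then have vV: "v \<in> V" and vi: "\<forall>x\<in>XX. v \<in> BB x \<union> CC x" by (auto simp: star_free_bag_def)
    show "v \<in> XX" using cover[OF vV] vi by (auto simp: Av_def)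
  qed
next
  show "XX \<subseteq> star_free_bag V E w XX"
    using XX_in_BC XX_sub by (auto simp: star_free_bag_def)
qed

lemma AC_disj:
  assumes x: "x \<in> XX" and y: "y \<in> XX" and ne: "x = y \<or> \<not> E x y"
  shows "AA x \<inter> CC y = {}"
proof (cases "x = y")
  case True then show ?thesis by (auto simp: Av_def)
next
  case False
  have xV: "x \<in> V" using x XX_sub by auto
  have nxy: "\<not> E x y" using ne False by simp
  have "y \<in> BB x \<union> CC x" using XX_in_BC[OF y x] .
  then have yB: "y \<in> BB x" using False nxy by (auto simp: Cv_def nbr_def)
  show ?thesis
  proof (rule ccontr)
    assume "AA x \<inter> CC y \<noteq> {}"
    then obtain u where u: "u \<in> AA x" "u \<in> CC y" by blast
    have up: "u \<notin> BB x" "\<forall>b\<in>BB x. \<not> E u b" using A_props[OF xV u(1)] by auto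
    show False
    proof (cases "u = y")
      case True then show False using up yB by simp
    next
      case False
      then have "E y u" using u(2) by (auto simp: Cv_def nbr_def)
      then show False using up yB symE by blast
    qed
  qed
qed

lemma laminar:
  assumes "X1 \<subseteq> XX" "\<forall>x\<in>X1. \<forall>y\<in>X1. \<not> E x y"
  shows "loosely_laminar (star_sep V E w ` X1)"
  unfolding loosely_laminar_def
proof (intro ballI)
  fix S S' assume S: "S \<in> star_sep V E w ` X1" and S': "S' \<in> star_sep V E w ` X1"
  then obtain x y where xy: "x \<in> X1" "y \<in> X1" "S = star_sep V E w x" "S' = star_sep V E w y"
    by blast
  have "AA x \<inter> CC y = {}" using AC_disj[of x y] xy(1,2) assms by blast
  moreover have "AA y \<inter> CC x = {}" using AC_disj[of y x] xy(1,2) assms by blast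
  ultimately show "loosely_non_crossing S S'"
    unfolding loosely_non_crossing_def star_sep_def xy(3,4) by simp
qed


lemma cnbr_set_I1: "u \<in> V \<Longrightarrow> b \<in> D \<Longrightarrow> E u b \<Longrightarrow> u \<in> cnbr_set V E D"
  by (auto simp: cnbr_set_def)

lemma cnbr_set_I2: "u \<in> D \<Longrightarrow> u \<in> cnbr_set V E D"
  by (auto simp: cnbr_set_def)

lemma paw_contra:
  assumes "induced_paw V E cc aa b1 b2"
    "D1 \<in> comps E (V - cnbr V E aa)" "{cc,b1,b2} \<subseteq> cnbr_set V E D1"
    "D2 \<in> comps E (V - cnbr V E b1)" "{cc,b2} \<subseteq> cnbr_set V E D2"
    "D3 \<in> comps E (V - cnbr V E b2)" "{cc,b1} \<subseteq> cnbr_set V E D3"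
  shows False
proof -
  have "\<forall>c a b1 b2. induced_paw V E c a b1 b2 \<longrightarrow>
        breaks V E a {c, b1, b2} \<or> breaks V E b1 {c, b2} \<or> breaks V E b2 {c, b1}"
    using pawf by (auto simp: paw_friendly_def)
  then have "breaks V E aa {cc, b1, b2} \<or> breaks V E b1 {cc, b2} \<or> breaks V E b2 {cc, b1}"
    using assms(1) by blast
  then show False using assms(2-7) unfolding breaks_def by blast
qed

lemma clique_in_C:
  assumes "p \<in> XX" "q \<in> XX" "p \<noteq> q" "E p q"
  shows "\<exists>b\<in>BB p. E q b"
proof -
  have pV: "p \<in> V" using assms XX_sub by auto
  have "q \<in> BB p \<union> CC p" using XX_in_BC[OF assms(2,1)] .
  moreover have "q \<notin> BB p" using Bv_sub[OF pV] assms(4) by blast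
  ultimately have "q \<in> CC p" by blast
  then show ?thesis using assms(3) by (auto simp: Cv_def)
qed

lemma big:
  assumes QX: "Q \<subseteq> XX" and cl: "\<forall>x\<in>Q. \<forall>y\<in>Q. x \<noteq> y \<longrightarrow> E x y" and c3: "3 \<le> card Q"
    and maxl: "\<And>u. u \<in> XX \<Longrightarrow> u \<notin> Q \<Longrightarrow> \<forall>p\<in>Q. E u p \<Longrightarrow> False"
  shows False
proof -
  have QV: "Q \<subseteq> V" using QX XX_sub by auto
  have finQ: "finite Q" using QV fin finite_subset by auto
  have "Q \<noteq> {}" using c3 by auto
  then obtain a where aQ: "a \<in> Q" by blast
  have aV: "a \<in> V" using aQ QV by auto
  define NQ where "NQ = (\<Union>p\<in>Q. cnbr V E p)"
  have NQV: "NQ \<subseteq> V" using QV cnbr_sub unfolding NQ_def by blast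
  have cnQ: "cnbr V E p \<subseteq> NQ" if "p \<in> Q" for p using that unfolding NQ_def by blast
  have NQball: "NQ \<subseteq> ball V E d a"
  proof
    fix z assume "z \<in> NQ"
    then obtain p where p: "p \<in> Q" "z \<in> cnbr V E p" unfolding NQ_def by blast
    have "p = a \<or> E a p" using cl aQ p(1) by auto
    moreover have "z = p \<or> E p z" "z \<in> V" using p QV by (auto simp: cnbr_def nbr_def)
    ultimately show "z \<in> ball V E d a" using ball2[OF aV _ _] p(1) QV by blast
  qed
  obtain K where K: "K \<in> comps E (V - NQ)" "c < sum w K"
    using heavy_exists[OF NQV aV NQball] by blast
  have KS: "K \<subseteq> V - NQ" using comp_sub[OF K(1)] .
  have KB: "K \<subseteq> BB p" if "p \<in> Q" for p
  proof -
    have "K \<subseteq> V - cnbr V E p" using KS cnQ[OF that] by blast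
    then show ?thesis using heavy_in[OF _ K(1) _ K(2)] that QV by blast
  qed
  have QC: "\<exists>b\<in>BB p. E q b" if "p \<in> Q" "q \<in> Q" "p \<noteq> q" for p q
    using clique_in_C[of p q] that QX cl by blast
  obtain k0 where k0: "k0 \<in> K" using comp_ne[OF K(1)] by blast
  have k0V: "k0 \<in> V" using k0 KS by blast
  have aNQ: "a \<in> NQ" using cnQ[OF aQ] by (auto simp: cnbr_def)
  have "(restr E V)\<^sup>*\<^sup>* k0 a" using conn k0V aV by (auto simp: connected_graph_def)
  moreover have "a \<notin> K" using aNQ KS by blast
  ultimately obtain s t where st: "(restr E V)\<^sup>*\<^sup>* k0 s" "restr E V s t" "s \<in> K" "t \<notin> K"
    using rtranclp_exit[of "restr E V" k0 a "\<lambda>x. x \<in> K"] k0 by blast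
  have tV: "t \<in> V" and Est: "E s t" using st(2) by (auto simp: restr_def)
  have tNQ: "t \<in> NQ"
  proof (rule ccontr)
    assume "t \<notin> NQ"
    then have "t \<in> K" using comp_closed[OF sym K(1) st(3) _ Est] tV by blast
    then show False using st(4) by simp
  qed
  define v0 where "v0 = t"
  have v0V: "v0 \<in> V" and Ev0s: "E v0 s" and sK: "s \<in> K" and v0NQ: "v0 \<in> NQ"
    using tV Est st(3) tNQ symE unfolding v0_def by auto
  have v0nQ: "v0 \<notin> Q"
  proof
    assume "v0 \<in> Q"
    then have "s \<in> BB v0" using KB sK by blast
    then show False using Bv_sub[OF v0V] Ev0s by blast
  qed
  obtain a' where a': "a' \<in> Q" "E a' v0"
  proof -
    obtain p where p: "p \<in> Q" "v0 \<in> cnbr V E p" using v0NQ unfolding NQ_def by blast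
    have "v0 \<noteq> p" using p(1) v0nQ by blast
    then have "E p v0" using p(2) by (auto simp: cnbr_def nbr_def)
    then show ?thesis using that p(1) by blast
  qed
  have adjC: "\<exists>b\<in>BB p. E v0 b" if "p \<in> Q" for p
    using KB[OF that] sK Ev0s by blast
  have nadjB: "v0 \<in> BB p" if "p \<in> Q" "\<not> E p v0" for p
  proof -
    have "p \<in> V" using that QV by blast
    moreover have "s \<in> BB p" using KB[OF that(1)] sK by blast
    moreover have "v0 \<noteq> p" using that(1) v0nQ by blast
    ultimately show ?thesis using Bv_closed[of p s v0] v0V symE[OF Ev0s] that(2) by blast
  qed
  have ulem: "\<exists>u\<in>XX. v0 \<in> AA u \<and> u \<notin> Q \<and> (\<forall>p\<in>Q. E p v0 \<longrightarrow> E u p)" if nX: "v0 \<notin> XX"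
  proof -
    obtain u where u: "u \<in> XX" "v0 \<in> AA u" using cover[OF v0V] nX by blast
    have uV: "u \<in> V" using u XX_sub by blast
    have up: "\<forall>b\<in>BB u. \<not> E v0 b" using A_props[OF uV u(2)] by blast
    have unQ: "u \<notin> Q"
    proof
      assume "u \<in> Q"
      then have "s \<in> BB u" using KB sK by blast
      then show False using up Ev0s by blast
    qed
    have "E u p" if p: "p \<in> Q" "E p v0" for p
    proof -
      have "p \<in> BB u \<union> CC u" using XX_in_BC[of p u] p(1) QX u(1) by blast
      moreover have "p \<notin> BB u" using up p(2) symE by blast
      ultimately have "p \<in> CC u" by blast
      moreover have "p \<noteq> u" using p(1) unQ by blast
      ultimately show "E u p" by (auto simp: Cv_def nbr_def)
    qed
    then show ?thesis using u unQ by blast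
  qed
  show False
  proof (cases "\<exists>b1\<in>Q. \<exists>b2\<in>Q. b1 \<noteq> b2 \<and> \<not> E b1 v0 \<and> \<not> E b2 v0")
    case True
    then obtain b1 b2 where b: "b1 \<in> Q" "b2 \<in> Q" "b1 \<noteq> b2" "\<not> E b1 v0" "\<not> E b2 v0" by blast
    have ab: "a' \<noteq> b1" "a' \<noteq> b2" using a'(2) b(4,5) by auto
    have paw: "induced_paw V E v0 a' b1 b2"
      unfolding induced_paw_def using v0V QV a' b ab v0nQ cl symE by auto
    show False
    proof (rule paw_contra[OF paw])
      show "BB a' \<in> comps E (V - cnbr V E a')" using Bv_spec a'(1) QV by blast
      show "{v0, b1, b2} \<subseteq> cnbr_set V E (BB a')"
        using adjC[OF a'(1)] QC[OF a'(1) b(1) ab(1)] QC[OF a'(1) b(2) ab(2)] v0V b QV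
        by (auto intro: cnbr_set_I1)
      show "BB b1 \<in> comps E (V - cnbr V E b1)" using Bv_spec b(1) QV by blast
      show "{v0, b2} \<subseteq> cnbr_set V E (BB b1)"
        using nadjB[OF b(1,4)] QC[OF b(1) b(2) b(3)] b QV
        by (auto intro: cnbr_set_I1 cnbr_set_I2)
      show "BB b2 \<in> comps E (V - cnbr V E b2)" using Bv_spec b(2) QV by blast
      show "{v0, b1} \<subseteq> cnbr_set V E (BB b2)"
        using nadjB[OF b(2,5)] QC[OF b(2) b(1)] b QV
        by (auto intro: cnbr_set_I1 cnbr_set_I2)
    qed
  next
    case False
    then have one: "\<forall>b1\<in>Q. \<forall>b2\<in>Q. \<not> E b1 v0 \<longrightarrow> \<not> E b2 v0 \<longrightarrow> b1 = b2" by blast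
    show False
    proof (cases "\<forall>p\<in>Q. E p v0")
      case True
      show False
      proof (cases "v0 \<in> XX")
        case True
        then show False using maxl[of v0] v0nQ \<open>\<forall>p\<in>Q. E p v0\<close> symE by blast
      next
        case False
        then obtain u where "u \<in> XX" "u \<notin> Q" "\<forall>p\<in>Q. E p v0 \<longrightarrow> E u p" using ulem by blast
        then show False using maxl[of u] \<open>\<forall>p\<in>Q. E p v0\<close> by blast
      qed
    next
      case False
      then obtain q where q: "q \<in> Q" "\<not> E q v0" by blast
      have adjall: "E p v0" if "p \<in> Q" "p \<noteq> q" for p using one q that by blast
      have "card (Q - {q}) \<ge> 2" using c3 q(1) finQ by simp
      then obtain a b where ab: "a \<in> Q" "b \<in> Q" "a \<noteq> q" "b \<noteq> q" "a \<noteq> b"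
      proof -
        assume r: "\<And>a b. a \<in> Q \<Longrightarrow> b \<in> Q \<Longrightarrow> a \<noteq> q \<Longrightarrow> b \<noteq> q \<Longrightarrow> a \<noteq> b \<Longrightarrow> thesis"
        assume "card (Q - {q}) \<ge> 2"
        then obtain a b where "a \<in> Q - {q}" "b \<in> Q - {q}" "a \<noteq> b"
          by (metis One_nat_def card_le_Suc0_iff_eq finite_Diff finQ not_less_eq_eq numeral_2_eq_2)
        then show thesis using r by blast
      qed
      have av: "E a v0" "E b v0" using adjall ab by auto
      have aV': "a \<in> V" "b \<in> V" "q \<in> V" using ab q QV by auto
      have qB: "q \<in> BB v0"
      proof (cases "v0 \<in> XX")
        case True
        have "q \<in> BB v0 \<union> CC v0" using XX_in_BC[of q v0] True q(1) QX by blast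
        moreover have "q \<notin> CC v0" using q v0nQ symE by (auto simp: Cv_def nbr_def)
        ultimately show ?thesis by blast
      next
        case False
        then obtain u where u: "u \<in> XX" "v0 \<in> AA u" "u \<notin> Q" "\<forall>p\<in>Q. E p v0 \<longrightarrow> E u p"
          using ulem by blast
        have uV: "u \<in> V" using u XX_sub by blast
        have nuq: "\<not> E u q"
        proof
          assume "E u q"
          then have "\<forall>p\<in>Q. E u p" using u(4) adjall by metis
          then show False using maxl u by blast
        qed
        have "q \<in> BB u \<union> CC u" using XX_in_BC[of q u] u(1) q(1) QX by blast
        moreover have "q \<noteq> u" using u(3) q(1) by blast
        ultimately have "q \<in> BB u" using nuq by (auto simp: Cv_def nbr_def)
        then show ?thesis using A_mono[OF uV u(2)] by blast
      qed
      have ball': "NQ \<union> cnbr V E v0 \<subseteq> ball V E d a"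
      proof -
        have "cnbr V E v0 \<subseteq> ball V E d a"
        proof
          fix z assume "z \<in> cnbr V E v0"
          then have "z = v0 \<or> E v0 z" "z \<in> V" using v0V by (auto simp: cnbr_def nbr_def)
          then show "z \<in> ball V E d a" using ball2[OF aV'(1) v0V] av(1) by blast
        qed
        moreover have "NQ \<subseteq> ball V E d a"
        proof
          fix z assume "z \<in> NQ"
          then obtain p where p: "p \<in> Q" "z \<in> cnbr V E p" unfolding NQ_def by blast
          have "p = a \<or> E a p" using cl ab(1) p(1) by auto
          moreover have "z = p \<or> E p z" "z \<in> V" using p QV by (auto simp: cnbr_def nbr_def)
          ultimately show "z \<in> ball V E d a" using ball2[OF aV'(1) _ _] p(1) QV by blast
        qed
        ultimately show ?thesis by blast
      qed
      have NV: "NQ \<union> cnbr V E v0 \<subseteq> V" using NQV cnbr_sub[OF v0V] by blast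
      obtain L where L: "L \<in> comps E (V - (NQ \<union> cnbr V E v0))" "c < sum w L"
        using heavy_exists[OF NV aV'(1) ball'] by blast
      have LS: "L \<subseteq> V - (NQ \<union> cnbr V E v0)" using comp_sub[OF L(1)] .
      have LK: "L \<subseteq> K" using heavy_in_gen[of "V - NQ" L _ K] L LS K by blast
      have LB: "L \<subseteq> BB v0" using heavy_in[OF v0V L(1) _ L(2)] LS by blast
      obtain l where l: "l \<in> L" using comp_ne[OF L(1)] by blast
      have path: "(restr E (V - NQ))\<^sup>*\<^sup>* s l" using comp_path[OF sym K(1) sK] l LK by blast
      have snB: "s \<notin> BB v0" using Bv_sub[OF v0V] Ev0s by blast
      have lB: "l \<in> BB v0" using l LB by blast
      obtain s' t' where st': "(restr E (V - NQ))\<^sup>*\<^sup>* s s'" "restr E (V - NQ) s' t'"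
          "s' \<notin> BB v0" "t' \<in> BB v0"
        using rtranclp_exit[of "restr E (V - NQ)" s l "\<lambda>x. x \<notin> BB v0"] path snB lB by blast
      have s'K: "s' \<in> K" using comp_reach[OF sym K(1) sK st'(1)] .
      have s'V: "s' \<in> V" "s' \<notin> NQ" using s'K KS by auto
      have Es't': "E s' t'" using st'(2) by (auto simp: restr_def)
      have s'v0: "s' \<noteq> v0" using s'V v0NQ by blast
      have Ev0s': "E v0 s'"
      proof (rule ccontr)
        assume "\<not> E v0 s'"
        then have "s' \<in> BB v0" using Bv_closed[OF v0V st'(4) s'V(1) symE[OF Es't'] s'v0] by blast
        then show False using st'(3) by blast
      qed
      have aNQ': "a \<in> NQ" "b \<in> NQ" using cnQ ab by (auto simp: cnbr_def)
      have nas: "\<not> E a s'" "\<not> E b s'"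
        using cnQ[OF ab(1)] cnQ[OF ab(2)] s'V aV' by (auto simp: cnbr_def nbr_def)
      have paw: "induced_paw V E s' v0 a b"
        unfolding induced_paw_def
        using s'V v0V aV' ab v0nQ cl symE av Ev0s' nas aNQ' s'v0 by auto
      have qa: "E a q" "E b q" using cl ab q(1) by auto
      show False
      proof (rule paw_contra[OF paw])
        show "BB v0 \<in> comps E (V - cnbr V E v0)" using Bv_spec v0V by blast
        show "{s', a, b} \<subseteq> cnbr_set V E (BB v0)"
          using st'(4) Es't' qa qB s'V aV' by (auto intro: cnbr_set_I1)
        show "BB a \<in> comps E (V - cnbr V E a)" using Bv_spec aV' by blast
        show "{s', b} \<subseteq> cnbr_set V E (BB a)"
          using KB[OF ab(1)] s'K QC[OF ab(1) ab(2) ab(5)] aV'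
          by (auto intro: cnbr_set_I1 cnbr_set_I2)
        show "BB b \<in> comps E (V - cnbr V E b)" using Bv_spec aV' by blast
        show "{s', a} \<subseteq> cnbr_set V E (BB b)"
          using KB[OF ab(2)] s'K QC[OF ab(2) ab(1)] ab(5) aV'
          by (auto intro: cnbr_set_I1 cnbr_set_I2)
      qed
    qed
  qed
qed

lemma no_clique3:
  assumes "K \<subseteq> XX" "\<forall>x\<in>K. \<forall>y\<in>K. x \<noteq> y \<longrightarrow> E x y"
  shows "card K \<le> 2"
proof (rule ccontr)
  assume "\<not> card K \<le> 2"
  then have K3: "3 \<le> card K" by simp
  let ?F = "{K. K \<subseteq> XX \<and> (\<forall>x\<in>K. \<forall>y\<in>K. x \<noteq> y \<longrightarrow> E x y)}"
  have finX: "finite XX" using XX_sub fin finite_subset by blast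
  have "?F \<subseteq> Pow XX" by blast
  then have finF: "finite ?F" using finX finite_subset by blast
  have KF: "K \<in> ?F" using assms by blast
  have "Max (card ` ?F) \<in> card ` ?F" using finF KF by (intro Max_in) auto
  then obtain Q where Q: "Q \<in> ?F" "card Q = Max (card ` ?F)" by auto
  have Qmax: "card K' \<le> card Q" if "K' \<in> ?F" for K'
    using Q(2) finF that by simp
  have "card K \<le> card Q" using Qmax KF .
  then have Q3: "3 \<le> card Q" using K3 by simp
  have finQ: "finite Q" using Q(1) finX finite_subset by blast
  show False
  proof (rule big)
    show "Q \<subseteq> XX" using Q(1) by blast
    show "\<forall>x\<in>Q. \<forall>y\<in>Q. x \<noteq> y \<longrightarrow> E x y" using Q(1) by blast
    show "3 \<le> card Q" by (rule Q3)
    fix u assume u: "u \<in> XX" "u \<notin> Q" "\<forall>p\<in>Q. E u p"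
    have "insert u Q \<in> ?F" using Q(1) u symE by auto
    then have "card (insert u Q) \<le> card Q" by (rule Qmax)
    then show False using finQ u(2) by simp
  qed
qed

lemma bip:
  assumes U: "U \<subseteq> V" and tf: "\<And>K. K \<subseteq> U \<Longrightarrow> (\<forall>x\<in>K. \<forall>y\<in>K. x \<noteq> y \<longrightarrow> E x y) \<Longrightarrow> card K \<le> 2"
  shows "bipartite E U"
proof -
  have perf: "chromatic_number E U = clique_number E U"
    using pawf U by (auto simp: paw_friendly_def perfect_def)
  let ?S = "{card K | K. K \<subseteq> U \<and> (\<forall>x\<in>K. \<forall>y\<in>K. x \<noteq> y \<longrightarrow> E x y)}"
  have Ssub: "?S \<subseteq> {..2}" using tf by auto
  have finS: "finite ?S" using Ssub finite_subset by blast
  have neS: "?S \<noteq> {}" by blast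
  have cl: "clique_number E U \<le> 2"
    unfolding clique_number_def using finS neS Ssub by (auto simp: Max_le_iff)
  have ex: "\<exists>k. \<exists>f::'a \<Rightarrow> nat. (\<forall>u\<in>U. f u < k) \<and> (\<forall>u\<in>U. \<forall>v\<in>U. E u v \<longrightarrow> f u \<noteq> f v)"
  proof (intro exI conjI)
    show "\<forall>u\<in>U. Ord u < card V + 1" using Ord_le U by fastforce
    show "\<forall>u\<in>U. \<forall>v\<in>U. E u v \<longrightarrow> Ord u \<noteq> Ord v"
    proof (intro ballI impI)
      fix u v assume uv: "u \<in> U" "v \<in> U" "E u v"
      then have "u \<noteq> v" using irr by blast
      then show "Ord u \<noteq> Ord v" using Ord_inj uv(1,2) U by (auto simp: inj_on_def)
    qed
  qed
  have "\<exists>f::'a \<Rightarrow> nat. (\<forall>u\<in>U. f u < chromatic_number E U) \<and> (\<forall>u\<in>U. \<forall>v\<in>U. E u v \<longrightarrow> f u \<noteq> f v)"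
    unfolding chromatic_number_def by (rule LeastI_ex[OF ex])
  then obtain f :: "'a \<Rightarrow> nat" where f0: "\<forall>u\<in>U. f u < chromatic_number E U"
      and f2: "\<forall>u\<in>U. \<forall>v\<in>U. E u v \<longrightarrow> f u \<noteq> f v" by blast
  have f: "\<forall>u\<in>U. f u < 2" "\<forall>u\<in>U. \<forall>v\<in>U. E u v \<longrightarrow> f u \<noteq> f v"
    using f0 f2 perf cl by fastforce+
  have "bipartition E U {u \<in> U. f u = 0} {u \<in> U. f u \<noteq> 0}"
    unfolding bipartition_def
  proof (intro conjI ballI)
    fix x y assume "x \<in> {u \<in> U. f u \<noteq> 0}" "y \<in> {u \<in> U. f u \<noteq> 0}"
    then have "f x = 1" "f y = 1" "x \<in> U" "y \<in> U" using f(1) by fastforce+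
    then show "\<not> E x y" using f(2) by metis
  next
    fix x y assume "x \<in> {u \<in> U. f u = 0}" "y \<in> {u \<in> U. f u = 0}"
    then have "f x = 0" "f y = 0" "x \<in> U" "y \<in> U" by auto
    then show "\<not> E x y" using f(2) by metis
  qed auto
  then show ?thesis unfolding bipartite_def by blast
qed

end

theorem lemma6p1:
  fixes V :: "'a set" and E :: "'a \<Rightarrow> 'a \<Rightarrow> bool" and w :: "'a \<Rightarrow> real"
    and c :: real and d \<delta> :: nat and Ord :: "'a \<Rightarrow> nat"
  assumes "1/2 \<le> c" and "c < 1"
    and "d > 0" and "\<delta> > 0" and "d \<ge> \<delta> + 3"
    and "graph V E" and "connected_graph V E" and "paw_friendly V E"
    and "max_degree V E = \<delta>"
    and "\<forall>v\<in>V. 0 \<le> w v \<and> w v \<le> 1" and "sum w V = 1"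
    and "\<not> (\<exists>X. d_bounded V E d X \<and> balanced_sep V E w c X)"
    and "bij_betw Ord V {1..card V}"
  shows "star_free_bag V E w (minimal_A V E w Ord) = minimal_A V E w Ord
       \<and> bipartite E (star_free_bag V E w (minimal_A V E w Ord))
       \<and> (\<forall>X1 X2. bipartition E (star_free_bag V E w (minimal_A V E w Ord)) X1 X2 \<longrightarrow>
       loosely_laminar (star_sep V E w ` X1) \<and> loosely_laminar (star_sep V E w ` X2))"
proof -
  interpret setting V E w c d Ord
  proof
    show "graph V E" "connected_graph V E" "paw_friendly V E" "sum w V = 1" "1/2 \<le> c"
      "\<not> (\<exists>X. d_bounded V E d X \<and> balanced_sep V E w c X)" "bij_betw Ord V {1..card V}"
      using assms by auto
    show "\<forall>v\<in>V. 0 \<le> w v" using assms(10) by blast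
    show "2 \<le> d" using assms(4,5) by linarith
  qed
  have beq: "star_free_bag V E w XX = XX" by (rule beta_eq)
  have b: "bipartite E (star_free_bag V E w XX)"
    unfolding beq by (rule bip[OF XX_sub no_clique3])
  have l: "loosely_laminar (star_sep V E w ` X1) \<and> loosely_laminar (star_sep V E w ` X2)"
    if "bipartition E (star_free_bag V E w XX) X1 X2" for X1 X2
  proof -
    have "X1 \<union> X2 = XX" "\<forall>x\<in>X1. \<forall>y\<in>X1. \<not> E x y" "\<forall>x\<in>X2. \<forall>y\<in>X2. \<not> E x y"
      using that beq by (auto simp: bipartition_def)
    then show ?thesis using laminar[of X1] laminar[of X2] by blast
  qed
  show ?thesis using beq b l by blast
qed

end
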